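(* The Waterfilling Mechanism (with exact bucketing) described in the context satisfies Non-Interference: for every nonempty finite set $S$ of analysts, every analyst $j\notin S$ (all analysts $l$ having workload $W_l$, weight $s_l>0$ and strategy $A_l$ with $W_l=W_lA_l^+A_l$ and every column of $A_l$ of $L_1$ norm $1$), and every $i\in S$, $\mathrm{Err}_i(S\cup\{j\})\le \mathrm{Err}_i(S)$.
   Context: Data are a vector $x\in\mathbb{R}^n$. Fix $\varepsilon>0$. Each analyst $l$ has a workload matrix $W_l$, a weight $s_l>0$ (entitled to budget $s_l\varepsilon$), and a strategy matrix $A_l$ chosen for $W_l$ alone by a selection step, with $W_l = W_lA_l^+A_l$ ($^+$ the Moore–Penrose pseudo-inverse) and every column of $A_l$ of $L_1$ norm $1$. Fix a norm $\|\cdot\|$ on row vectors. Waterfilling Mechanism for a collective $S$: maintain buckets $B$ (unit vectors $e$ with weights $f_B(e)>0$), initially empty; for each $l\in S$ and each nonzero row $v$ of $s_lA_l$, set $e=v/\|v\|$; if $e\in B$ increase $f_B(e)$ by $\|v\|$, else add $e$ with $f_B(e)=\|v\|$. The joint strategy $A$ has rows $f_B(e)e$, $e\in B$. With $\varepsilon_S=(\sum_{l\in S}s_l)\varepsilon$, release $y=Ax+\eta$, $\eta$ i.i.d. Laplace of scale $\|A\|_1/\varepsilon_S$ ($\|A\|_1$ = maximum column $L_1$ norm). Analyst $i$ estimates $W_ix$ by $W_iA^+y$, with expected error $\mathrm{Err}_i(S)=\frac{2\|A\|_1^2}{\varepsilon_S^2}\|W_iA^+\|_F^2$. *)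

theory Defs
  imports Complex_Main "Jordan_Normal_Form.Matrix"
begin

definition mp_pinv :: "real mat \<Rightarrow> real mat" where
  "mp_pinv M = (THE X. X \<in> carrier_mat (dim_col M) (dim_row M)
      \<and> M * X * M = M \<and> X * M * X = X
      \<and> transpose_mat (M * X) = M * X \<and> transpose_mat (X * M) = X * M)"

definition col_L1_norm :: "real mat \<Rightarrow> real" where
  "col_L1_norm M = Max (insert 0 {(\<Sum>i<dim_row M. \<bar>M $$ (i, c)\<bar>) | c. c < dim_col M})"

definition frob_norm :: "real mat \<Rightarrow> real" where
  "frob_norm M = sqrt (\<Sum>i<dim_row M. \<Sum>c<dim_col M. (M $$ (i, c))\<^sup>2)"

definition is_row_norm :: "nat \<Rightarrow> (real vec \<Rightarrow> real) \<Rightarrow> bool" where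
  "is_row_norm n N \<longleftrightarrow>
     (\<forall>v \<in> carrier_vec n. 0 \<le> N v \<and> (N v = 0 \<longleftrightarrow> v = 0\<^sub>v n)) \<and>
     (\<forall>v \<in> carrier_vec n. \<forall>c. N (c \<cdot>\<^sub>v v) = \<bar>c\<bar> * N v) \<and>
     (\<forall>u \<in> carrier_vec n. \<forall>v \<in> carrier_vec n. N (u + v) \<le> N u + N v)"

text \<open>Buckets: a list of pairs (unit vector e, weight f_B(e)). One step processes a row v.\<close>
definition wf_step :: "nat \<Rightarrow> (real vec \<Rightarrow> real) \<Rightarrow> (real vec \<times> real) list \<Rightarrow> real vec
    \<Rightarrow> (real vec \<times> real) list" where
  "wf_step n N B v =
     (if v = 0\<^sub>v n then B
      else (let e = (1 / N v) \<cdot>\<^sub>v v in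
            if e \<in> fst ` set B
            then map (\<lambda>(e', w). if e' = e then (e', w + N v) else (e', w)) B
            else B @ [(e, N v)]))"

definition wf_buckets :: "nat \<Rightarrow> (real vec \<Rightarrow> real) \<Rightarrow> (nat \<Rightarrow> real) \<Rightarrow> (nat \<Rightarrow> real mat)
    \<Rightarrow> nat set \<Rightarrow> (real vec \<times> real) list" where
  "wf_buckets n N s A S =
     foldl (\<lambda>B l. foldl (\<lambda>B' r. wf_step n N B' (row (s l \<cdot>\<^sub>m A l) r)) B [0..<dim_row (A l)])
       [] (sorted_list_of_set S)"

definition joint_strategy :: "nat \<Rightarrow> (real vec \<Rightarrow> real) \<Rightarrow> (nat \<Rightarrow> real) \<Rightarrow> (nat \<Rightarrow> real mat)
    \<Rightarrow> nat set \<Rightarrow> real mat" where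
  "joint_strategy n N s A S = mat_of_rows n (map (\<lambda>(e, w). w \<cdot>\<^sub>v e) (wf_buckets n N s A S))"

definition wf_err :: "nat \<Rightarrow> (real vec \<Rightarrow> real) \<Rightarrow> real \<Rightarrow> (nat \<Rightarrow> real mat) \<Rightarrow> (nat \<Rightarrow> real)
    \<Rightarrow> (nat \<Rightarrow> real mat) \<Rightarrow> nat \<Rightarrow> nat set \<Rightarrow> real" where
  "wf_err n N \<epsilon> W s A i S =
     (let AS = joint_strategy n N s A S; \<epsilon>S = (\<Sum>l\<in>S. s l) * \<epsilon> in
      2 * (col_L1_norm AS)\<^sup>2 / \<epsilon>S\<^sup>2 * (frob_norm (W i * mp_pinv AS))\<^sup>2)"

end

theory Submission
  imports Defs "Jordan_Normal_Form.Determinant"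
begin


definition penrose :: "real mat \<Rightarrow> real mat \<Rightarrow> bool" where
  "penrose M X \<longleftrightarrow> X \<in> carrier_mat (dim_col M) (dim_row M)
      \<and> M * X * M = M \<and> X * M * X = X
      \<and> transpose_mat (M * X) = M * X \<and> transpose_mat (X * M) = X * M"

lemma penrose_unique:
  assumes M: "M \<in> carrier_mat m n" and X: "penrose M X" and Y: "penrose M Y"
  shows "X = Y"
proof -
  have Xc: "X \<in> carrier_mat n m" and Yc: "Y \<in> carrier_mat n m" using X Y M unfolding penrose_def by auto
  have tc: "transpose_mat M \<in> carrier_mat n m" "transpose_mat X \<in> carrier_mat m n" "transpose_mat Y \<in> carrier_mat m n"
    using M Xc Yc by auto
  have x1: "M * X * M = M" "X * M * X = X" "transpose_mat (M * X) = M * X" "transpose_mat (X * M) = X * M"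
    using X unfolding penrose_def by auto
  have y1: "M * Y * M = M" "Y * M * Y = Y" "transpose_mat (M * Y) = M * Y" "transpose_mat (Y * M) = Y * M"
    using Y unfolding penrose_def by auto
  have MYc: "M * Y \<in> carrier_mat m m" and MXc: "M * X \<in> carrier_mat m m" using M Xc Yc by auto
  have YMc: "Y * M \<in> carrier_mat n n" and XMc: "X * M \<in> carrier_mat n n" using M Xc Yc by auto
  have tMY: "transpose_mat (M * Y) = transpose_mat Y * transpose_mat M" by (rule transpose_mult[OF M Yc])
  have tMX: "transpose_mat (M * X) = transpose_mat X * transpose_mat M" by (rule transpose_mult[OF M Xc])
  have tYM: "transpose_mat (Y * M) = transpose_mat M * transpose_mat Y" by (rule transpose_mult[OF Yc M])
  have tXM: "transpose_mat (X * M) = transpose_mat M * transpose_mat X" by (rule transpose_mult[OF Xc M])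
  have tM: "transpose_mat M = transpose_mat M * transpose_mat (M * Y)"
  proof -
    have "transpose_mat M = transpose_mat (M * Y * M)" using y1 by simp
    also have "\<dots> = transpose_mat M * transpose_mat (M * Y)" by (rule transpose_mult[OF MYc M])
    finally show ?thesis .
  qed
  have MX: "M * X = M * Y"
  proof -
    have "M * X = transpose_mat (M * X)" using x1 by simp
    also have "\<dots> = transpose_mat X * transpose_mat M" by (rule tMX)
    also have "\<dots> = transpose_mat X * (transpose_mat M * transpose_mat (M * Y))"
      using tM by simp
    also have "\<dots> = (transpose_mat X * transpose_mat M) * transpose_mat (M * Y)"
      by (rule assoc_mult_mat[symmetric, OF tc(2) tc(1)], use MYc in simp)
    also have "\<dots> = (M * X) * (M * Y)" using x1 y1 tMX by simp
    also have "\<dots> = (M * X * M) * Y" by (rule assoc_mult_mat[symmetric, OF MXc M Yc])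
    also have "\<dots> = M * Y" using x1 by simp
    finally show ?thesis .
  qed
  have tM2: "transpose_mat M = transpose_mat (Y * M) * transpose_mat M"
  proof -
    have "transpose_mat M = transpose_mat (M * (Y * M))" using y1 assoc_mult_mat[OF M Yc M] by simp
    also have "\<dots> = transpose_mat (Y * M) * transpose_mat M" by (rule transpose_mult[OF M YMc])
    finally show ?thesis .
  qed
  have XM: "X * M = Y * M"
  proof -
    have "X * M = transpose_mat (X * M)" using x1 by simp
    also have "\<dots> = transpose_mat M * transpose_mat X" by (rule tXM)
    also have "\<dots> = (transpose_mat (Y * M) * transpose_mat M) * transpose_mat X"
      using tM2 by simp
    also have "\<dots> = transpose_mat (Y * M) * (transpose_mat M * transpose_mat X)"
      by (rule assoc_mult_mat[OF _ tc(1) tc(2)], use YMc in simp)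
    also have "\<dots> = (Y * M) * (X * M)" using x1 y1 tXM by simp
    also have "\<dots> = Y * (M * X * M)"
      using assoc_mult_mat[OF Yc M XMc] assoc_mult_mat[OF M Xc M] by simp
    also have "\<dots> = Y * M" using x1 by simp
    finally show ?thesis .
  qed
  have "X = X * M * X" using x1 by simp
  also have "\<dots> = X * (M * Y)" using assoc_mult_mat[OF Xc M Xc] MX by simp
  also have "\<dots> = (Y * M) * Y" using assoc_mult_mat[OF Xc M Yc] XM by simp
  also have "\<dots> = Y" using y1 by simp
  finally show ?thesis .
qed

definition lc :: "nat \<Rightarrow> real vec list \<Rightarrow> real vec \<Rightarrow> real vec" where
  "lc n gs x = vec n (\<lambda>j. \<Sum>k<length gs. x $ k * gs ! k $ j)"

lemma lc_index[simp]: "j < n \<Longrightarrow> lc n gs x $ j = (\<Sum>k<length gs. x $ k * gs ! k $ j)"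
  and lc_dim[simp]: "dim_vec (lc n gs x) = n" and lc_carrier[simp]: "lc n gs x \<in> carrier_vec n"
  unfolding lc_def by auto

definition vext :: "nat \<Rightarrow> real vec \<Rightarrow> real vec" where
  "vext r c = vec (Suc r) (\<lambda>k. if k < r then c $ k else 0)"

lemma lc_snoc_vext:
  assumes "c \<in> carrier_vec (length gs)"
  shows "lc n (gs @ [a]) (vext (length gs) c) = lc n gs c"
proof (rule eq_vecI)
  fix j assume "j < dim_vec (lc n gs c)"
  hence j: "j < n" by simp
  have "(\<Sum>k<length (gs @ [a]). vext (length gs) c $ k * (gs @ [a]) ! k $ j)
     = (\<Sum>k<length gs. vext (length gs) c $ k * (gs @ [a]) ! k $ j)"
    by (simp add: vext_def)
  also have "\<dots> = (\<Sum>k<length gs. c $ k * gs ! k $ j)"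
    by (intro sum.cong) (auto simp: vext_def nth_append)
  finally show "lc n (gs @ [a]) (vext (length gs) c) $ j = lc n gs c $ j" using j by simp
qed simp

lemma lc_snoc_split:
  assumes j: "j < n" and x: "x \<in> carrier_vec (Suc (length gs))"
  shows "lc n (gs @ [a]) x $ j = lc n gs (vec (length gs) (\<lambda>k. x $ k)) $ j + x $ length gs * a $ j"
  using j by (simp add: nth_append)

lemma basis_exists:
  assumes "set as \<subseteq> carrier_vec n"
  shows "\<exists>gs cs. set gs \<subseteq> carrier_vec n \<and> length cs = length as \<and> set cs \<subseteq> carrier_vec (length gs)
    \<and> (\<forall>i<length as. as ! i = lc n gs (cs ! i))
    \<and> (\<forall>x\<in>carrier_vec (length gs). lc n gs x = 0\<^sub>v n \<longrightarrow> x = 0\<^sub>v (length gs))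
    \<and> (\<forall>k<length gs. \<exists>i<length as. cs ! i = unit_vec (length gs) k)"
  using assms
proof (induction as rule: rev_induct)
  case Nil
  show ?case
    by (rule exI[of _ "[]"], rule exI[of _ "[]"]) auto
next
  case (snoc a as)
  from snoc have a: "a \<in> carrier_vec n" and asc: "set as \<subseteq> carrier_vec n" by auto
  from snoc.IH[OF asc] obtain gs cs where
    gs: "set gs \<subseteq> carrier_vec n" and lcs: "length cs = length as" and csc: "set cs \<subseteq> carrier_vec (length gs)"
    and rep: "\<forall>i<length as. as ! i = lc n gs (cs ! i)"
    and li: "\<forall>x\<in>carrier_vec (length gs). lc n gs x = 0\<^sub>v n \<longrightarrow> x = 0\<^sub>v (length gs)"
    and un: "\<forall>k<length gs. \<exists>i<length as. cs ! i = unit_vec (length gs) k" by blast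
  let ?r = "length gs"
  show ?case
  proof (cases "\<exists>c\<in>carrier_vec ?r. a = lc n gs c")
    case True
    then obtain c where c: "c \<in> carrier_vec ?r" "a = lc n gs c" by blast
    show ?thesis
    proof (rule exI[of _ gs], rule exI[of _ "cs @ [c]"], intro conjI)
      show "\<forall>i<length (as @ [a]). (as @ [a]) ! i = lc n gs ((cs @ [c]) ! i)"
        using rep c lcs by (auto simp: nth_append)
      show "\<forall>k<length gs. \<exists>i<length (as @ [a]). (cs @ [c]) ! i = unit_vec (length gs) k"
      proof (intro allI impI)
        fix k assume "k < length gs"
        then obtain i where "i < length as" "cs ! i = unit_vec (length gs) k" using un by blast
        thus "\<exists>i<length (as @ [a]). (cs @ [c]) ! i = unit_vec (length gs) k"
          using lcs by (intro exI[of _ i]) (auto simp: nth_append)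
      qed
    qed (use gs lcs csc c li in auto)
  next
    case False
    let ?gs = "gs @ [a]"
    let ?cs = "map (vext ?r) cs @ [unit_vec (Suc ?r) ?r]"
    show ?thesis
    proof (rule exI[of _ ?gs], rule exI[of _ ?cs], intro conjI)
      show "set ?gs \<subseteq> carrier_vec n" using gs a by auto
      show "length ?cs = length (as @ [a])" using lcs by simp
      show "set ?cs \<subseteq> carrier_vec (length ?gs)" by (auto simp: vext_def)
      show "\<forall>i<length (as @ [a]). (as @ [a]) ! i = lc n ?gs (?cs ! i)"
      proof (intro allI impI)
        fix i assume i: "i < length (as @ [a])"
        show "(as @ [a]) ! i = lc n ?gs (?cs ! i)"
        proof (cases "i < length as")
          case True
          have ci: "cs ! i \<in> carrier_vec ?r" using csc lcs True by (auto simp: set_conv_nth)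
          have "lc n ?gs (?cs ! i) = lc n ?gs (vext ?r (cs ! i))" using True lcs by (simp add: nth_append)
          also have "\<dots> = lc n gs (cs ! i)" by (rule lc_snoc_vext[OF ci])
          finally show ?thesis using rep True by (simp add: nth_append)
        next
          case False
          hence ii: "i = length as" using i by simp
          have "lc n ?gs (?cs ! i) = lc n ?gs (unit_vec (Suc ?r) ?r)" using ii lcs by (simp add: nth_append)
          also have "\<dots> = a"
          proof (rule eq_vecI)
            fix j assume "j < dim_vec a"
            hence j: "j < n" using a by simp
            have "(\<Sum>k<Suc ?r. unit_vec (Suc ?r) ?r $ k * ?gs ! k $ j) = a $ j"
              by (simp add: sum.lessThan_Suc nth_append)
            thus "lc n ?gs (unit_vec (Suc ?r) ?r) $ j = a $ j" using j by simp
          qed (use a in simp)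
          finally show ?thesis using ii by simp
        qed
      qed
      show "\<forall>x\<in>carrier_vec (length ?gs). lc n ?gs x = 0\<^sub>v n \<longrightarrow> x = 0\<^sub>v (length ?gs)"
      proof (intro ballI impI)
        fix x assume x: "x \<in> carrier_vec (length ?gs)" and z: "lc n ?gs x = 0\<^sub>v n"
        let ?y = "vec ?r (\<lambda>k. x $ k)"
        have x': "x \<in> carrier_vec (Suc ?r)" using x by simp
        have eqj: "\<And>j. j < n \<Longrightarrow> lc n gs ?y $ j + x $ ?r * a $ j = 0"
        proof -
          fix j assume j: "j < n"
          have "lc n ?gs x $ j = 0" using z j by simp
          thus "lc n gs ?y $ j + x $ ?r * a $ j = 0" using lc_snoc_split[OF j x'] by simp
        qed
        have xr: "x $ ?r = 0"
        proof (rule ccontr)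
          assume nz: "x $ ?r \<noteq> 0"
          have "a = lc n gs ((- 1 / x $ ?r) \<cdot>\<^sub>v ?y)"
          proof (rule eq_vecI)
            fix j assume "j < dim_vec (lc n gs ((- 1 / x $ ?r) \<cdot>\<^sub>v ?y))"
            hence j: "j < n" by simp
            have "lc n gs ((- 1 / x $ ?r) \<cdot>\<^sub>v ?y) $ j = (- 1 / x $ ?r) * lc n gs ?y $ j"
              using j by (simp add: sum_distrib_left mult.assoc)
            also have "\<dots> = a $ j" using eqj[OF j] nz by (simp add: field_simps)
            finally show "a $ j = lc n gs ((- 1 / x $ ?r) \<cdot>\<^sub>v ?y) $ j" by simp
          qed (use a in simp)
          moreover have "(- 1 / x $ ?r) \<cdot>\<^sub>v ?y \<in> carrier_vec ?r" by simp
          ultimately show False using False by blast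
        qed
        have "lc n gs ?y = 0\<^sub>v n"
          by (rule eq_vecI) (use eqj xr in auto)
        hence y0: "?y = 0\<^sub>v ?r" using li by simp
        show "x = 0\<^sub>v (length ?gs)"
        proof (rule eq_vecI)
          fix k assume "k < dim_vec (0\<^sub>v (length ?gs))"
          hence k: "k < Suc ?r" by simp
          show "x $ k = 0\<^sub>v (length ?gs) $ k"
          proof (cases "k < ?r")
            case True
            have "?y $ k = 0" using y0 True by simp
            thus ?thesis using True k by simp
          next
            case False
            hence "k = ?r" using k by simp
            thus ?thesis using xr by simp
          qed
        qed (use x in simp)
      qed
      show "\<forall>k<length ?gs. \<exists>i<length (as @ [a]). ?cs ! i = unit_vec (length ?gs) k"
      proof (intro allI impI)
        fix k assume k: "k < length ?gs"
        show "\<exists>i<length (as @ [a]). ?cs ! i = unit_vec (length ?gs) k"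
        proof (cases "k < ?r")
          case True
          then obtain i where i: "i < length as" "cs ! i = unit_vec ?r k" using un by blast
          have "?cs ! i = vext ?r (unit_vec ?r k)" using i lcs by (simp add: nth_append)
          also have "\<dots> = unit_vec (length ?gs) k"
            by (rule eq_vecI) (auto simp: vext_def True unit_vec_def)
          finally show ?thesis using i by (intro exI[of _ i]) auto
        next
          case False
          hence "k = ?r" using k by simp
          thus ?thesis using lcs by (intro exI[of _ "length as"]) (auto simp: nth_append)
        qed
      qed
    qed
  qed
qed


lemma assoc_dim: "dim_col (A::real mat) = dim_row B \<Longrightarrow> dim_col B = dim_row C \<Longrightarrow> A * B * C = A * (B * C)"
  by (rule assoc_mult_mat[of A "dim_row A" "dim_col A" B "dim_col B" C "dim_col C"]) auto

lemma transpose_mult_dim: "dim_col (A::real mat) = dim_row B \<Longrightarrow> transpose_mat (A * B) = transpose_mat B * transpose_mat A"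
  by (rule transpose_mult[of A "dim_row A" "dim_col A" B "dim_col B"]) auto

lemma frf:
  fixes M :: "real mat"
  assumes M: "M \<in> carrier_mat m n"
  shows "\<exists>r C G. C \<in> carrier_mat m r \<and> G \<in> carrier_mat r n \<and> M = C * G
     \<and> (\<forall>x\<in>carrier_vec r. transpose_mat G *\<^sub>v x = 0\<^sub>v n \<longrightarrow> x = 0\<^sub>v r)
     \<and> (\<forall>y\<in>carrier_vec r. C *\<^sub>v y = 0\<^sub>v m \<longrightarrow> y = 0\<^sub>v r)"
proof -
  let ?as = "map (row M) [0..<m]"
  have asc: "set ?as \<subseteq> carrier_vec n" using M by auto
  from basis_exists[OF asc] obtain gs cs where
    gs: "set gs \<subseteq> carrier_vec n" and lcs: "length cs = length ?as" and csc: "set cs \<subseteq> carrier_vec (length gs)"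
    and rep: "\<forall>i<length ?as. ?as ! i = lc n gs (cs ! i)"
    and li: "\<forall>x\<in>carrier_vec (length gs). lc n gs x = 0\<^sub>v n \<longrightarrow> x = 0\<^sub>v (length gs)"
    and un: "\<forall>k<length gs. \<exists>i<length ?as. cs ! i = unit_vec (length gs) k" by blast
  let ?r = "length gs"
  define G where "G = mat_of_rows n gs"
  define C where "C = mat_of_rows ?r cs"
  have Gc: "G \<in> carrier_mat ?r n" unfolding G_def by simp
  have Cc: "C \<in> carrier_mat m ?r" unfolding C_def using lcs mat_of_rows_carrier(1)[of "length gs" cs] by simp
  have csi: "\<And>i. i < m \<Longrightarrow> cs ! i \<in> carrier_vec ?r" using csc lcs by (auto simp: set_conv_nth)
  have gsk: "\<And>k. k < ?r \<Longrightarrow> gs ! k \<in> carrier_vec n" using gs by (auto simp: set_conv_nth)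
  have GT: "\<And>x. x \<in> carrier_vec ?r \<Longrightarrow> transpose_mat G *\<^sub>v x = lc n gs x"
  proof -
    fix x :: "real vec" assume x: "x \<in> carrier_vec ?r"
    show "transpose_mat G *\<^sub>v x = lc n gs x"
    proof (rule eq_vecI)
      fix j assume "j < dim_vec (lc n gs x)"
      hence j: "j < n" by simp
      have "(transpose_mat G *\<^sub>v x) $ j = col G j \<bullet> x" using j Gc by simp
      also have "\<dots> = (\<Sum>k<?r. gs ! k $ j * x $ k)"
        unfolding scalar_prod_def using x j Gc
        by (auto simp: G_def mat_of_rows_index lessThan_atLeast0 intro!: sum.cong)
      also have "\<dots> = lc n gs x $ j" using j by (simp add: mult.commute)
      finally show "(transpose_mat G *\<^sub>v x) $ j = lc n gs x $ j" .
    qed (use Gc in simp)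
  qed
  have MCG: "M = C * G"
  proof (rule eq_matI)
    fix i j assume "i < dim_row (C * G)" "j < dim_col (C * G)"
    hence i: "i < m" and j: "j < n" using Cc Gc by auto
    have "(C * G) $$ (i, j) = row C i \<bullet> col G j" using i j Cc Gc by simp
    also have "\<dots> = (\<Sum>k<?r. cs ! i $ k * gs ! k $ j)"
      unfolding scalar_prod_def using i j Cc Gc lcs
      by (auto simp: G_def C_def mat_of_rows_index lessThan_atLeast0 intro!: sum.cong)
    also have "\<dots> = lc n gs (cs ! i) $ j" using j by simp
    also have "\<dots> = ?as ! i $ j" using rep i by simp
    also have "\<dots> = M $$ (i, j)" using i j M by simp
    finally show "M $$ (i, j) = (C * G) $$ (i, j)" by simp
  qed (use M Cc Gc in auto)
  have liG: "\<forall>x\<in>carrier_vec ?r. transpose_mat G *\<^sub>v x = 0\<^sub>v n \<longrightarrow> x = 0\<^sub>v ?r"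
    using li GT by simp
  have liC: "\<forall>y\<in>carrier_vec ?r. C *\<^sub>v y = 0\<^sub>v m \<longrightarrow> y = 0\<^sub>v ?r"
  proof (intro ballI impI)
    fix y :: "real vec" assume y: "y \<in> carrier_vec ?r" and z: "C *\<^sub>v y = 0\<^sub>v m"
    show "y = 0\<^sub>v ?r"
    proof (rule eq_vecI)
      fix k assume "k < dim_vec (0\<^sub>v ?r :: real vec)"
      hence k: "k < ?r" by simp
      obtain i where i: "i < m" "cs ! i = unit_vec ?r k" using un k by auto
      have "(C *\<^sub>v y) $ i = row C i \<bullet> y" using i Cc by simp
      also have "\<dots> = cs ! i \<bullet> y" using i lcs csi by (simp add: C_def)
      also have "\<dots> = y $ k" using i k y by simp
      finally show "y $ k = 0\<^sub>v ?r $ k" using z i k by simp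
    qed (use y in simp)
  qed
  show ?thesis using Cc Gc MCG liG liC by blast
qed

lemma gram_inv:
  fixes G :: "real mat"
  assumes G: "G \<in> carrier_mat r n" and li: "\<forall>x\<in>carrier_vec r. transpose_mat G *\<^sub>v x = 0\<^sub>v n \<longrightarrow> x = 0\<^sub>v r"
  shows "\<exists>K. K \<in> carrier_mat r r \<and> G * transpose_mat G * K = 1\<^sub>m r \<and> K * (G * transpose_mat G) = 1\<^sub>m r"
proof -
  let ?H = "G * transpose_mat G"
  have H: "?H \<in> carrier_mat r r" using G by simp
  have d: "det ?H \<noteq> 0"
  proof
    assume "det ?H = 0"
    then obtain v where v: "v \<in> carrier_vec r" "v \<noteq> 0\<^sub>v r" "?H *\<^sub>v v = 0\<^sub>v r"
      using det_0_iff_vec_prod_zero[OF H] by blast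
    let ?w = "transpose_mat G *\<^sub>v v"
    have w: "?w \<in> carrier_vec n" using G v by simp
    have eq: "G *\<^sub>v ?w = ?H *\<^sub>v v" using G v by simp
    have "?w \<bullet> ?w = v \<bullet> (G *\<^sub>v ?w)" by (rule transpose_vec_mult_scalar[OF G w v(1)])
    also have "\<dots> = v \<bullet> (?H *\<^sub>v v)" using eq by simp
    finally have "?w \<bullet> ?w = 0" using v by simp
    hence "(\<Sum>i\<in>{0..<dim_vec ?w}. ?w $ i * ?w $ i) = 0" unfolding scalar_prod_def .
    hence "(\<Sum>i\<in>{0..<n}. ?w $ i * ?w $ i) = 0" using w by (simp only: carrier_vecD)
    hence "\<forall>i\<in>{0..<n}. ?w $ i * ?w $ i = 0"
      by (subst (asm) sum_nonneg_eq_0_iff) auto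
    hence "?w = 0\<^sub>v n" using w G by (intro eq_vecI) auto
    thus False using li v by auto
  qed
  define K where "K = (1 / det ?H) \<cdot>\<^sub>m adj_mat ?H"
  have adj: "adj_mat ?H \<in> carrier_mat r r" "?H * adj_mat ?H = det ?H \<cdot>\<^sub>m 1\<^sub>m r" "adj_mat ?H * ?H = det ?H \<cdot>\<^sub>m 1\<^sub>m r"
    using adj_mat[OF H] by auto
  have "?H * K = (1 / det ?H) \<cdot>\<^sub>m (?H * adj_mat ?H)" unfolding K_def by (rule mult_smult_distrib[OF H adj(1)])
  also have "\<dots> = 1\<^sub>m r" unfolding adj(2) using d by (intro eq_matI) auto
  finally have 1: "?H * K = 1\<^sub>m r" .
  have "K * ?H = (1 / det ?H) \<cdot>\<^sub>m (adj_mat ?H * ?H)" unfolding K_def by (rule mult_smult_assoc_mat[OF adj(1) H])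
  also have "\<dots> = 1\<^sub>m r" unfolding adj(3) using d by (intro eq_matI) auto
  finally have 2: "K * ?H = 1\<^sub>m r" .
  have "K \<in> carrier_mat r r" unfolding K_def using adj by simp
  thus ?thesis using 1 2 by blast
qed

lemma inv_sym:
  fixes H K :: "real mat"
  assumes H: "H \<in> carrier_mat r r" and Ht: "transpose_mat H = H" and K: "K \<in> carrier_mat r r"
    and HK: "H * K = 1\<^sub>m r" and KH: "K * H = 1\<^sub>m r"
  shows "transpose_mat K = K"
proof -
  have "transpose_mat K = transpose_mat K * (H * K)" using HK K by simp
  also have "\<dots> = (transpose_mat K * transpose_mat H) * K" using H K Ht by (simp add: assoc_dim)
  also have "transpose_mat K * transpose_mat H = transpose_mat (H * K)" using H K by (simp add: transpose_mult_dim)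
  also have "\<dots> = 1\<^sub>m r" using HK by simp
  finally show ?thesis using K by simp
qed

lemma penrose_exists:
  fixes M :: "real mat"
  assumes M: "M \<in> carrier_mat m n"
  shows "\<exists>X. penrose M X"
proof -
  obtain r C G where Cc: "C \<in> carrier_mat m r" and Gc: "G \<in> carrier_mat r n" and MCG: "M = C * G"
    and liG: "\<forall>x\<in>carrier_vec r. transpose_mat G *\<^sub>v x = 0\<^sub>v n \<longrightarrow> x = 0\<^sub>v r"
    and liC: "\<forall>y\<in>carrier_vec r. C *\<^sub>v y = 0\<^sub>v m \<longrightarrow> y = 0\<^sub>v r"
    using frf[OF M] by blast
  obtain K where Kc: "K \<in> carrier_mat r r" and K1: "G * transpose_mat G * K = 1\<^sub>m r"
     and K2: "K * (G * transpose_mat G) = 1\<^sub>m r" using gram_inv[OF Gc liG] by blast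
  have CT: "transpose_mat C \<in> carrier_mat r m" using Cc by simp
  obtain L where Lc: "L \<in> carrier_mat r r" and L1: "transpose_mat C * C * L = 1\<^sub>m r"
     and L2: "L * (transpose_mat C * C) = 1\<^sub>m r" using gram_inv[OF CT] liC by auto
  have Ks: "transpose_mat K = K"
    by (rule inv_sym[OF _ _ Kc K1 K2]) (use Gc in \<open>simp_all add: transpose_mult_dim\<close>)
  have Ls: "transpose_mat L = L"
    by (rule inv_sym[OF _ _ Lc L1 L2]) (use Cc in \<open>simp_all add: transpose_mult_dim\<close>)
  have dims: "dim_row C = m" "dim_col C = r" "dim_row G = r" "dim_col G = n"
    "dim_row K = r" "dim_col K = r" "dim_row L = r" "dim_col L = r" using Cc Gc Kc Lc by auto
  have K1': "\<And>Z. dim_row Z = r \<Longrightarrow> G * (transpose_mat G * (K * Z)) = Z"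
  proof -
    fix Z :: "real mat" assume "dim_row Z = r"
    hence "G * (transpose_mat G * (K * Z)) = (G * transpose_mat G * K) * Z" using dims by (simp add: assoc_dim)
    thus "G * (transpose_mat G * (K * Z)) = Z" using K1 \<open>dim_row Z = r\<close> by simp
  qed
  have L1': "\<And>Z. dim_row Z = r \<Longrightarrow> transpose_mat C * (C * (L * Z)) = Z"
  proof -
    fix Z :: "real mat" assume "dim_row Z = r"
    hence "transpose_mat C * (C * (L * Z)) = (transpose_mat C * C * L) * Z" using dims by (simp add: assoc_dim)
    thus "transpose_mat C * (C * (L * Z)) = Z" using L1 \<open>dim_row Z = r\<close> by simp
  qed
  have K2': "\<And>Z. dim_row Z = r \<Longrightarrow> K * (G * (transpose_mat G * Z)) = Z"
  proof -
    fix Z :: "real mat" assume "dim_row Z = r"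
    hence "K * (G * (transpose_mat G * Z)) = (K * (G * transpose_mat G)) * Z" using dims by (simp add: assoc_dim)
    thus "K * (G * (transpose_mat G * Z)) = Z" using K2 \<open>dim_row Z = r\<close> by simp
  qed
  have L2': "\<And>Z. dim_row Z = r \<Longrightarrow> L * (transpose_mat C * (C * Z)) = Z"
  proof -
    fix Z :: "real mat" assume "dim_row Z = r"
    hence "L * (transpose_mat C * (C * Z)) = (L * (transpose_mat C * C)) * Z" using dims by (simp add: assoc_dim)
    thus "L * (transpose_mat C * (C * Z)) = Z" using L2 \<open>dim_row Z = r\<close> by simp
  qed
  define X where "X = transpose_mat G * (K * (L * transpose_mat C))"
  have Xc: "X \<in> carrier_mat n m" unfolding X_def using dims by auto
  have MX: "M * X = C * (L * transpose_mat C)"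
    unfolding MCG X_def using dims by (simp add: assoc_dim K1' K2' L1' L2')
  have XM: "X * M = transpose_mat G * (K * G)"
    unfolding MCG X_def using dims by (simp add: assoc_dim K1' K2' L1' L2')
  have "penrose M X" unfolding penrose_def
  proof (intro conjI)
    show "X \<in> carrier_mat (dim_col M) (dim_row M)" using Xc M by simp
    show "M * X * M = M" unfolding MX unfolding MCG using dims by (simp add: assoc_dim K1' K2' L1' L2')
    show "X * M * X = X" unfolding XM unfolding X_def using dims by (simp add: assoc_dim K1' K2' L1' L2')
    show "transpose_mat (M * X) = M * X" unfolding MX using dims Ls by (simp add: assoc_dim transpose_mult_dim)
    show "transpose_mat (X * M) = X * M" unfolding XM using dims Ks by (simp add: assoc_dim transpose_mult_dim)
  qed
  thus ?thesis by blast
qed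

lemma mp_pinv_penrose:
  assumes M: "M \<in> carrier_mat m n"
  shows "penrose M (mp_pinv M)"
proof -
  obtain X where X: "penrose M X" using penrose_exists[OF M] by blast
  have "mp_pinv M = X" unfolding mp_pinv_def
  proof (rule the_equality)
    show "X \<in> carrier_mat (dim_col M) (dim_row M) \<and> M * X * M = M \<and> X * M * X = X \<and>
      transpose_mat (M * X) = M * X \<and> transpose_mat (X * M) = X * M" using X unfolding penrose_def by blast
    fix Y assume "Y \<in> carrier_mat (dim_col M) (dim_row M) \<and> M * Y * M = M \<and> Y * M * Y = Y \<and>
      transpose_mat (M * Y) = M * Y \<and> transpose_mat (Y * M) = Y * M"
    hence "penrose M Y" unfolding penrose_def by blast
    thus "Y = X" using penrose_unique[OF M _ X] by blast
  qed
  thus ?thesis using X by simp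
qed



definition fs :: "real mat \<Rightarrow> real" where
  "fs M = (\<Sum>i<dim_row M. \<Sum>c<dim_col M. (M $$ (i, c))\<^sup>2)"

lemma fs_nonneg: "fs M \<ge> 0" unfolding fs_def by (intro sum_nonneg) auto

lemma frob_sq: "(frob_norm M)\<^sup>2 = fs M"
  unfolding frob_norm_def fs_def[symmetric] using fs_nonneg by simp

lemma proj_le:
  fixes Y Q :: "real mat"
  assumes Y: "Y \<in> carrier_mat k r" and Q: "Q \<in> carrier_mat r r"
    and Qt: "transpose_mat Q = Q" and QQ: "Q * Q = Q"
  shows "fs (Y * Q) \<le> fs Y"
proof -
  define Z where "Z = Y - Y * Q"
  have YQ: "Y * Q \<in> carrier_mat k r" using Y Q by simp
  have Zc: "Z \<in> carrier_mat k r" unfolding Z_def using Y YQ by (simp add: minus_carrier_mat)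
  have Zt: "transpose_mat Z = transpose_mat Y - Q * transpose_mat Y"
    unfolding Z_def using Y Q Qt by (simp add: transpose_minus[OF Y YQ] transpose_mult_dim)
  have e1: "(Y * Q) * (Q * transpose_mat Y) = (Y * Q) * transpose_mat Y"
  proof -
    have "(Y * Q) * (Q * transpose_mat Y) = Y * ((Q * Q) * transpose_mat Y)" using Y Q by (simp add: assoc_dim)
    thus ?thesis using QQ Y Q by (simp add: assoc_dim)
  qed
  have prod: "(Y * Q) * transpose_mat Z = (Y * Q) * transpose_mat Y - (Y * Q) * (Q * transpose_mat Y)"
    unfolding Zt by (rule mult_minus_distrib_mat[OF YQ]) (use Y Q in auto)
  have diag: "\<And>i. i < k \<Longrightarrow> (\<Sum>c<r. (Y * Q) $$ (i, c) * Z $$ (i, c)) = 0"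
  proof -
    fix i assume i: "i < k"
    have "((Y * Q) * transpose_mat Z) $$ (i, i) = 0" unfolding prod e1 using i Y Q by simp
    moreover have "((Y * Q) * transpose_mat Z) $$ (i, i) = (\<Sum>c<r. (Y * Q) $$ (i, c) * Z $$ (i, c))"
      using i Y Q Zc by (auto simp del: assoc_mult_mat simp: scalar_prod_def lessThan_atLeast0 intro!: sum.cong)
    ultimately show "(\<Sum>c<r. (Y * Q) $$ (i, c) * Z $$ (i, c)) = 0" by simp
  qed
  have ent: "\<And>i c. i < k \<Longrightarrow> c < r \<Longrightarrow> Y $$ (i, c) = (Y * Q) $$ (i, c) + Z $$ (i, c)"
    unfolding Z_def using Y Q by simp
  have "fs Y = (\<Sum>i<k. \<Sum>c<r. ((Y * Q) $$ (i, c) + Z $$ (i, c))\<^sup>2)"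
    unfolding fs_def using Y ent by (auto intro!: sum.cong)
  also have "\<dots> = (\<Sum>i<k. \<Sum>c<r. ((Y * Q) $$ (i, c))\<^sup>2) + (\<Sum>i<k. \<Sum>c<r. (Z $$ (i, c))\<^sup>2)
      + 2 * (\<Sum>i<k. \<Sum>c<r. (Y * Q) $$ (i, c) * Z $$ (i, c))"
    by (simp add: power2_sum sum.distrib sum_distrib_left mult.assoc)
  also have "(\<Sum>i<k. \<Sum>c<r. (Y * Q) $$ (i, c) * Z $$ (i, c)) = 0" using diag by simp
  also have "(\<Sum>i<k. \<Sum>c<r. ((Y * Q) $$ (i, c))\<^sup>2) = fs (Y * Q)" unfolding fs_def using Y Q by (intro sum.cong) auto
  also have "(\<Sum>i<k. \<Sum>c<r. (Z $$ (i, c))\<^sup>2) = fs Z" unfolding fs_def using Zc by simp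
  finally show ?thesis using fs_nonneg[of Z] by simp
qed



definition keyw :: "(real vec \<times> real) list \<Rightarrow> real vec \<Rightarrow> real" where
  "keyw B e = (\<Sum>p<length B. if fst (B ! p) = e then snd (B ! p) else 0)"

definition binv :: "nat \<Rightarrow> (real vec \<times> real) list \<Rightarrow> bool" where
  "binv n B \<longleftrightarrow> distinct (map fst B) \<and> (\<forall>x\<in>set B. fst x \<in> carrier_vec n \<and> snd x > 0)"

definition contrib :: "nat \<Rightarrow> (real vec \<Rightarrow> real) \<Rightarrow> real vec \<Rightarrow> real vec \<Rightarrow> real" where
  "contrib n N v e = (if v \<noteq> 0\<^sub>v n \<and> e = (1 / N v) \<cdot>\<^sub>v v then N v else 0)"

definition colsum :: "(real vec \<times> real) list \<Rightarrow> nat \<Rightarrow> real" where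
  "colsum B c = (\<Sum>p<length B. \<bar>snd (B ! p) * fst (B ! p) $ c\<bar>)"

lemma binv_nth: "binv n B \<Longrightarrow> p < length B \<Longrightarrow> fst (B ! p) \<in> carrier_vec n \<and> snd (B ! p) > 0"
  unfolding binv_def by (metis nth_mem)

lemma key_unique:
  assumes "binv n B" "p0 < length B" "p < length B"
  shows "fst (B ! p) = fst (B ! p0) \<longleftrightarrow> p = p0"
proof -
  have d: "distinct (map fst B)" using assms unfolding binv_def by simp
  show ?thesis using nth_eq_iff_index_eq[OF d, of p p0] assms by simp
qed

lemma sum_key:
  assumes "binv n B" "p0 < length B"
  shows "(\<Sum>p<length B. if fst (B ! p) = fst (B ! p0) then g p else 0) = g p0"
proof -
  have "(\<Sum>p<length B. if fst (B ! p) = fst (B ! p0) then g p else 0) = (\<Sum>p<length B. if p = p0 then g p else 0)"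
    by (intro sum.cong refl) (use key_unique[OF assms(1,2)] in auto)
  also have "\<dots> = g p0" using assms(2) by (simp add: sum.delta)
  finally show ?thesis .
qed

lemma keyw_at: "binv n B \<Longrightarrow> p0 < length B \<Longrightarrow> keyw B (fst (B ! p0)) = snd (B ! p0)"
  unfolding keyw_def by (rule sum_key)

lemma keyw_pos_mem: assumes "keyw B e > 0" shows "\<exists>p0<length B. fst (B ! p0) = e"
proof (rule ccontr)
  assume "\<not> ?thesis"
  hence "keyw B e = 0" unfolding keyw_def by (intro sum.neutral) auto
  thus False using assms by simp
qed

lemma norm_props:
  assumes norm: "is_row_norm n N" and v: "v \<in> carrier_vec n" and nz: "v \<noteq> 0\<^sub>v n"
  shows "N v > 0"
proof -
  have "0 \<le> N v" "N v = 0 \<longleftrightarrow> v = 0\<^sub>v n" using norm v unfolding is_row_norm_def by auto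
  thus ?thesis using nz by auto
qed

lemma contrib_nonneg: "is_row_norm n N \<Longrightarrow> v \<in> carrier_vec n \<Longrightarrow> contrib n N v e \<ge> 0"
  unfolding contrib_def using norm_props by fastforce

lemma step_props:
  assumes norm: "is_row_norm n N" and v: "v \<in> carrier_vec n" and B: "binv n B"
  shows "binv n (wf_step n N B v) \<and> (\<forall>e. keyw (wf_step n N B v) e = keyw B e + contrib n N v e)
    \<and> (\<forall>c<n. colsum (wf_step n N B v) c = colsum B c + \<bar>v $ c\<bar>)"
proof (cases "v = 0\<^sub>v n")
  case True
  thus ?thesis using B unfolding wf_step_def contrib_def by simp
next
  case False
  have Nv: "N v > 0" by (rule norm_props[OF norm v False])
  define e0 where "e0 = (1 / N v) \<cdot>\<^sub>v v"
  have e0c: "e0 \<in> carrier_vec n" unfolding e0_def using v by simp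
  have abs_e0: "\<And>c. c < n \<Longrightarrow> N v * \<bar>e0 $ c\<bar> = \<bar>v $ c\<bar>"
    unfolding e0_def using v Nv by (simp add: abs_mult)
  have contr: "\<And>e. contrib n N v e = (if e = e0 then N v else 0)"
    unfolding contrib_def e0_def using False by simp
  show ?thesis
  proof (cases "e0 \<in> fst ` set B")
    case True
    define f where "f = (\<lambda>(e' :: real vec, w :: real). if e' = e0 then (e', w + N v) else (e', w))"
    have step: "wf_step n N B v = map f B" unfolding wf_step_def f_def using False True by (simp add: e0_def Let_def)
    have ff: "\<And>x. fst (f x) = fst x" "\<And>x. snd (f x) = snd x + (if fst x = e0 then N v else 0)"
      unfolding f_def by (auto split: prod.splits)
    have mf: "map fst (map f B) = map fst B" using ff by (induct B) auto
    obtain p0 where p0: "p0 < length B" "fst (B ! p0) = e0" using True by (auto simp: in_set_conv_nth)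
    have inv: "binv n (map f B)" using B Nv unfolding binv_def mf by (auto simp: ff)
    have kw: "\<forall>e. keyw (map f B) e = keyw B e + contrib n N v e"
    proof
      fix e
      have "keyw (map f B) e = (\<Sum>p<length B. (if fst (B ! p) = e then snd (B ! p) else 0)
           + (if fst (B ! p) = e then (if fst (B ! p) = e0 then N v else 0) else 0))"
        unfolding keyw_def by (intro sum.cong) (auto simp: ff)
      also have "\<dots> = keyw B e + (\<Sum>p<length B. if fst (B ! p) = e then (if fst (B ! p) = e0 then N v else 0) else 0)"
        unfolding keyw_def by (simp add: sum.distrib)
      also have "(\<Sum>p<length B. if fst (B ! p) = e then (if fst (B ! p) = e0 then N v else 0) else 0)
          = (\<Sum>p<length B. if fst (B ! p) = fst (B ! p0) then (if e = e0 then N v else 0) else 0)"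
        by (intro sum.cong) (auto simp: p0)
      also have "\<dots> = contrib n N v e" using sum_key[OF B p0(1), of "\<lambda>_. N v"] contr by simp
      finally show "keyw (map f B) e = keyw B e + contrib n N v e" .
    qed
    have cs: "\<forall>c<n. colsum (map f B) c = colsum B c + \<bar>v $ c\<bar>"
    proof (intro allI impI)
      fix c assume c: "c < n"
      have "colsum (map f B) c = (\<Sum>p<length B. \<bar>snd (B ! p) * fst (B ! p) $ c\<bar>
           + (if fst (B ! p) = fst (B ! p0) then \<bar>v $ c\<bar> else 0))"
        unfolding colsum_def length_map
      proof (intro sum.cong refl)
        fix p assume p: "p \<in> {..<length B}"
        have pos: "snd (B ! p) > 0" using binv_nth[OF B] p by auto
        show "\<bar>snd (map f B ! p) * fst (map f B ! p) $ c\<bar> = \<bar>snd (B ! p) * fst (B ! p) $ c\<bar>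
           + (if fst (B ! p) = fst (B ! p0) then \<bar>v $ c\<bar> else 0)"
        proof (cases "fst (B ! p) = e0")
          case True
          have "\<bar>(snd (B ! p) + N v) * e0 $ c\<bar> = snd (B ! p) * \<bar>e0 $ c\<bar> + N v * \<bar>e0 $ c\<bar>"
          proof -
            have "\<bar>snd (B ! p) + N v\<bar> = snd (B ! p) + N v" using pos Nv by simp
            thus ?thesis by (subst abs_mult) (simp add: distrib_right)
          qed
          thus ?thesis using True p p0 abs_e0[OF c] pos by (simp add: ff abs_mult)
        next
          case False
          thus ?thesis using p p0 by (simp add: ff)
        qed
      qed
      also have "\<dots> = colsum B c + \<bar>v $ c\<bar>"
        unfolding colsum_def sum.distrib using sum_key[OF B p0(1), of "\<lambda>_. \<bar>v $ c\<bar>"] by simp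
      finally show "colsum (map f B) c = colsum B c + \<bar>v $ c\<bar>" .
    qed
    show ?thesis using inv kw cs step by simp
  next
    case notin: False
    have step: "wf_step n N B v = B @ [(e0, N v)]" unfolding wf_step_def using False notin by (simp add: e0_def Let_def)
    have inv: "binv n (B @ [(e0, N v)])" using B Nv e0c notin unfolding binv_def by auto
    have kw: "\<forall>e. keyw (B @ [(e0, N v)]) e = keyw B e + contrib n N v e"
    proof
      fix e
      have "(\<Sum>p<length B. if fst ((B @ [(e0, N v)]) ! p) = e then snd ((B @ [(e0, N v)]) ! p) else 0) = keyw B e"
        unfolding keyw_def by (intro sum.cong) (auto simp: nth_append)
      thus "keyw (B @ [(e0, N v)]) e = keyw B e + contrib n N v e"
        unfolding contr by (simp add: keyw_def)
    qed
    have cs: "\<forall>c<n. colsum (B @ [(e0, N v)]) c = colsum B c + \<bar>v $ c\<bar>"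
    proof (intro allI impI)
      fix c assume c: "c < n"
      have "(\<Sum>p<length B. \<bar>snd ((B @ [(e0, N v)]) ! p) * fst ((B @ [(e0, N v)]) ! p) $ c\<bar>) = colsum B c"
        unfolding colsum_def by (intro sum.cong) (auto simp: nth_append)
      thus "colsum (B @ [(e0, N v)]) c = colsum B c + \<bar>v $ c\<bar>"
        using abs_e0[OF c] Nv by (simp add: colsum_def abs_mult)
    qed
    show ?thesis using inv kw cs step by simp
  qed
qed

lemma fold_props:
  assumes norm: "is_row_norm n N" and h: "\<forall>r\<in>set xs. h r \<in> carrier_vec n" and B: "binv n B"
  shows "binv n (foldl (\<lambda>B r. wf_step n N B (h r)) B xs)
    \<and> (\<forall>e. keyw (foldl (\<lambda>B r. wf_step n N B (h r)) B xs) e = keyw B e + sum_list (map (\<lambda>r. contrib n N (h r) e) xs))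
    \<and> (\<forall>c<n. colsum (foldl (\<lambda>B r. wf_step n N B (h r)) B xs) c = colsum B c + sum_list (map (\<lambda>r. \<bar>h r $ c\<bar>) xs))"
  using h B
proof (induction xs arbitrary: B)
  case Nil
  thus ?case by simp
next
  case (Cons x xs)
  have hx: "h x \<in> carrier_vec n" using Cons.prems by simp
  note st = step_props[OF norm hx Cons.prems(2)]
  have IH: "binv n (foldl (\<lambda>B r. wf_step n N B (h r)) (wf_step n N B (h x)) xs)
    \<and> (\<forall>e. keyw (foldl (\<lambda>B r. wf_step n N B (h r)) (wf_step n N B (h x)) xs) e = keyw (wf_step n N B (h x)) e + sum_list (map (\<lambda>r. contrib n N (h r) e) xs))
    \<and> (\<forall>c<n. colsum (foldl (\<lambda>B r. wf_step n N B (h r)) (wf_step n N B (h x)) xs) c = colsum (wf_step n N B (h x)) c + sum_list (map (\<lambda>r. \<bar>h r $ c\<bar>) xs))"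
    using Cons.IH[of "wf_step n N B (h x)"] Cons.prems st by simp
  show ?case using IH st by simp
qed



lemma outer_props:
  assumes norm: "is_row_norm n N" and Adim: "\<And>l. dim_col (A l) = n" and B: "binv n B"
  shows "binv n (foldl (\<lambda>B l. foldl (\<lambda>B' r. wf_step n N B' (row (s l \<cdot>\<^sub>m A l) r)) B [0..<dim_row (A l)]) B ls)
    \<and> (\<forall>e. keyw (foldl (\<lambda>B l. foldl (\<lambda>B' r. wf_step n N B' (row (s l \<cdot>\<^sub>m A l) r)) B [0..<dim_row (A l)]) B ls) e
          = keyw B e + sum_list (map (\<lambda>l. \<Sum>r<dim_row (A l). contrib n N (row (s l \<cdot>\<^sub>m A l) r) e) ls))
    \<and> (\<forall>c<n. colsum (foldl (\<lambda>B l. foldl (\<lambda>B' r. wf_step n N B' (row (s l \<cdot>\<^sub>m A l) r)) B [0..<dim_row (A l)]) B ls) c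
          = colsum B c + sum_list (map (\<lambda>l. \<Sum>r<dim_row (A l). \<bar>row (s l \<cdot>\<^sub>m A l) r $ c\<bar>) ls))"
  using B
proof (induction ls arbitrary: B)
  case Nil
  thus ?case by simp
next
  case (Cons l ls)
  let ?B1 = "foldl (\<lambda>B' r. wf_step n N B' (row (s l \<cdot>\<^sub>m A l) r)) B [0..<dim_row (A l)]"
  have h: "\<forall>r\<in>set [0..<dim_row (A l)]. row (s l \<cdot>\<^sub>m A l) r \<in> carrier_vec n"
  proof
    fix r show "row (s l \<cdot>\<^sub>m A l) r \<in> carrier_vec n" using Adim[of l] unfolding carrier_vec_def by simp
  qed
  note fp = fold_props[OF norm h Cons.prems]
  have sl1: "\<And>e. sum_list (map (\<lambda>r. contrib n N (row (s l \<cdot>\<^sub>m A l) r) e) [0..<dim_row (A l)])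
     = (\<Sum>r<dim_row (A l). contrib n N (row (s l \<cdot>\<^sub>m A l) r) e)"
    by (simp add: interv_sum_list_conv_sum_set_nat lessThan_atLeast0)
  have sl2: "\<And>c. sum_list (map (\<lambda>r. \<bar>row (s l \<cdot>\<^sub>m A l) r $ c\<bar>) [0..<dim_row (A l)])
     = (\<Sum>r<dim_row (A l). \<bar>row (s l \<cdot>\<^sub>m A l) r $ c\<bar>)"
    by (simp add: interv_sum_list_conv_sum_set_nat lessThan_atLeast0)
  note IH = Cons.IH[of ?B1]
  show ?case using fp IH sl1 sl2 by (simp add: add.assoc)
qed

lemma buckets_props:
  assumes norm: "is_row_norm n N" and Adim: "\<And>l. dim_col (A l) = n" and S: "finite S"
  shows "binv n (wf_buckets n N s A S)
    \<and> (\<forall>e. keyw (wf_buckets n N s A S) e = (\<Sum>l\<in>S. \<Sum>r<dim_row (A l). contrib n N (row (s l \<cdot>\<^sub>m A l) r) e))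
    \<and> (\<forall>c<n. colsum (wf_buckets n N s A S) c = (\<Sum>l\<in>S. \<Sum>r<dim_row (A l). \<bar>row (s l \<cdot>\<^sub>m A l) r $ c\<bar>))"
proof -
  have b0: "binv n []" unfolding binv_def by simp
  note op = outer_props[OF norm Adim b0, where s=s and ls="sorted_list_of_set S"]
  have d: "distinct (sorted_list_of_set S)" by simp
  have k0: "\<And>e. keyw [] e = 0" unfolding keyw_def by simp
  have c0: "\<And>c. colsum [] c = 0" unfolding colsum_def by simp
  show ?thesis using op unfolding wf_buckets_def k0 c0 sum_list_distinct_conv_sum_set[OF d] set_sorted_list_of_set[OF S]
    by simp
qed



definition jsm :: "nat \<Rightarrow> (real vec \<times> real) list \<Rightarrow> real mat" where
  "jsm n B = mat_of_rows n (map (\<lambda>(e, w). w \<cdot>\<^sub>v e) B)"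

lemma jsm_carrier: "jsm n B \<in> carrier_mat (length B) n"
  unfolding jsm_def using mat_of_rows_carrier(1)[of n "map (\<lambda>(e, w). w \<cdot>\<^sub>v e) B"] by simp

lemma jsm_index:
  assumes "binv n B" "p < length B" "c < n"
  shows "jsm n B $$ (p, c) = snd (B ! p) * fst (B ! p) $ c"
proof -
  have e: "fst (B ! p) \<in> carrier_vec n" using binv_nth[OF assms(1,2)] by simp
  have "jsm n B $$ (p, c) = (map (\<lambda>(e, w). w \<cdot>\<^sub>v e) B) ! p $ c"
    unfolding jsm_def using assms by (simp add: mat_of_rows_index)
  also have "\<dots> = (snd (B ! p) \<cdot>\<^sub>v fst (B ! p)) $ c" using assms(2) by (simp add: case_prod_beta)
  also have "\<dots> = snd (B ! p) * fst (B ! p) $ c" using e assms(3) by simp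
  finally show ?thesis .
qed

lemma jsm_col_norm:
  assumes B: "binv n B" and n: "n > 0" and T: "\<forall>c<n. colsum B c = T" and T0: "T \<ge> 0"
  shows "col_L1_norm (jsm n B) = T"
proof -
  have "{(\<Sum>i<dim_row (jsm n B). \<bar>jsm n B $$ (i, c)\<bar>) | c. c < dim_col (jsm n B)} = {T}"
  proof -
    have "\<And>c. c < n \<Longrightarrow> (\<Sum>i<dim_row (jsm n B). \<bar>jsm n B $$ (i, c)\<bar>) = T"
    proof -
      fix c assume c: "c < n"
      have "(\<Sum>i<dim_row (jsm n B). \<bar>jsm n B $$ (i, c)\<bar>) = colsum B c"
        unfolding colsum_def using jsm_carrier[of n B] jsm_index[OF B _ c] by (intro sum.cong) auto
      thus "(\<Sum>i<dim_row (jsm n B). \<bar>jsm n B $$ (i, c)\<bar>) = T" using T c by simp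
    qed
    thus ?thesis using n jsm_carrier[of n B] by auto
  qed
  thus ?thesis unfolding col_L1_norm_def using T0 by simp
qed

lemma rowspace:
  assumes B: "binv n B" and norm: "is_row_norm n N" and Ai: "Ai \<in> carrier_mat mi n" and si: "si > 0"
    and cov: "\<forall>r<mi. row (si \<cdot>\<^sub>m Ai) r \<noteq> 0\<^sub>v n \<longrightarrow> keyw B ((1 / N (row (si \<cdot>\<^sub>m Ai) r)) \<cdot>\<^sub>v row (si \<cdot>\<^sub>m Ai) r) > 0"
  shows "\<exists>R. R \<in> carrier_mat mi (length B) \<and> Ai = R * jsm n B"
proof -
  define v where "v r = row (si \<cdot>\<^sub>m Ai) r" for r
  define ev where "ev r = (1 / N (v r)) \<cdot>\<^sub>v v r" for r
  define R where "R = mat mi (length B) (\<lambda>(r, p). if v r \<noteq> 0\<^sub>v n \<and> fst (B ! p) = ev r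
       then N (v r) / (si * snd (B ! p)) else 0)"
  have Rc: "R \<in> carrier_mat mi (length B)" unfolding R_def by simp
  have J: "jsm n B \<in> carrier_mat (length B) n" by (rule jsm_carrier)
  have vc: "\<And>r c. r < mi \<Longrightarrow> c < n \<Longrightarrow> v r $ c = si * Ai $$ (r, c)"
    unfolding v_def using Ai by simp
  have vcar: "\<And>r. r < mi \<Longrightarrow> v r \<in> carrier_vec n" unfolding v_def using Ai by simp
  have "Ai = R * jsm n B"
  proof (rule eq_matI)
    fix r c assume "r < dim_row (R * jsm n B)" "c < dim_col (R * jsm n B)"
    hence r: "r < mi" and c: "c < n" using Rc J by auto
    have prod: "(R * jsm n B) $$ (r, c) = (\<Sum>p<length B. R $$ (r, p) * (snd (B ! p) * fst (B ! p) $ c))"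
      using r c Rc J jsm_index[OF B _ c]
      by (auto simp: scalar_prod_def lessThan_atLeast0 intro!: sum.cong)
    show "Ai $$ (r, c) = (R * jsm n B) $$ (r, c)"
    proof (cases "v r = 0\<^sub>v n")
      case True
      have "R $$ (r, p) = 0" if "p < length B" for p unfolding R_def using r that True by simp
      hence "(R * jsm n B) $$ (r, c) = 0" unfolding prod by simp
      moreover have "Ai $$ (r, c) = 0" using vc[OF r c] True c si by simp
      ultimately show ?thesis by simp
    next
      case False
      have Nv: "N (v r) > 0" using norm_props[OF norm vcar[OF r] False] .
      have "keyw B (ev r) > 0" using cov r False unfolding ev_def v_def by blast
      then obtain p0 where p0: "p0 < length B" "fst (B ! p0) = ev r" using keyw_pos_mem by blast
      have w0: "snd (B ! p0) > 0" using binv_nth[OF B p0(1)] by simp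
      have "(R * jsm n B) $$ (r, c) = (\<Sum>p<length B. if fst (B ! p) = fst (B ! p0)
          then N (v r) / (si * snd (B ! p)) * (snd (B ! p) * fst (B ! p) $ c) else 0)"
        unfolding prod using r False p0 by (intro sum.cong) (auto simp: R_def)
      also have "\<dots> = N (v r) / (si * snd (B ! p0)) * (snd (B ! p0) * fst (B ! p0) $ c)"
        by (rule sum_key[OF B p0(1)])
      also have "\<dots> = N (v r) / si * ev r $ c" using w0 p0 by (simp add: field_simps)
      also have "\<dots> = v r $ c / si" unfolding ev_def using Nv vcar[OF r] c by simp
      also have "\<dots> = Ai $$ (r, c)" using vc[OF r c] si by simp
      finally show ?thesis by simp
    qed
  qed (use Rc J Ai in auto)
  thus ?thesis using Rc by blast
qed

lemma sq_single:
  fixes F :: "nat set"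
  assumes F: "finite F" and u: "\<forall>p1\<in>F. \<forall>p2\<in>F. P p1 \<longrightarrow> P p2 \<longrightarrow> p1 = p2"
  shows "(\<Sum>p\<in>F. if P p then t p else 0)\<^sup>2 = (\<Sum>p\<in>F. if P p then (t p)\<^sup>2 else (0::real))"
proof (cases "\<exists>p0\<in>F. P p0")
  case True
  then obtain p0 where p0: "p0 \<in> F" "P p0" by blast
  have "\<And>f. (\<Sum>p\<in>F. if P p then f p else (0::real)) = f p0"
  proof -
    fix f :: "nat \<Rightarrow> real"
    have "(\<Sum>p\<in>F. if P p then f p else 0) = (\<Sum>p\<in>F. if p = p0 then f p else 0)"
    proof (intro sum.cong refl)
      fix x assume x: "x \<in> F"
      show "(if P x then f x else 0) = (if x = p0 then f x else 0)"
        using u p0 x by (cases "P x") auto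
    qed
    thus "(\<Sum>p\<in>F. if P p then f p else 0) = f p0" using F p0 by (simp add: sum.delta)
  qed
  thus ?thesis by simp
next
  case False
  thus ?thesis by (simp add: sum.neutral)
qed



lemma transfer:
  assumes B: "binv n B" and B': "binv n B'" and mono: "\<forall>e. keyw B e \<le> keyw B' e"
    and X: "X \<in> carrier_mat k (length B)"
  shows "\<exists>X'. X' \<in> carrier_mat k (length B') \<and> X' * jsm n B' = X * jsm n B \<and> fs X' \<le> fs X"
proof -
  define t where "t a p = X $$ (a, p) * snd (B ! p) / keyw B' (fst (B ! p))" for a p
  define X' where "X' = mat k (length B') (\<lambda>(a, q). \<Sum>p<length B. if fst (B ! p) = fst (B' ! q) then t a p else 0)"
  have X'c: "X' \<in> carrier_mat k (length B')" unfolding X'_def by simp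
  have J: "jsm n B \<in> carrier_mat (length B) n" and J': "jsm n B' \<in> carrier_mat (length B') n"
    by (rule jsm_carrier)+
  have match: "\<And>p. p < length B \<Longrightarrow> \<exists>q0<length B'. fst (B' ! q0) = fst (B ! p) \<and> snd (B' ! q0) = keyw B' (fst (B ! p))
      \<and> snd (B ! p) > 0 \<and> snd (B ! p) \<le> keyw B' (fst (B ! p))"
  proof -
    fix p assume p: "p < length B"
    have w: "snd (B ! p) > 0" using binv_nth[OF B p] by simp
    have "keyw B (fst (B ! p)) = snd (B ! p)" by (rule keyw_at[OF B p])
    hence le: "snd (B ! p) \<le> keyw B' (fst (B ! p))" using mono by metis
    then obtain q0 where q0: "q0 < length B'" "fst (B' ! q0) = fst (B ! p)"
      using keyw_pos_mem[of B' "fst (B ! p)"] w by auto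
    have "snd (B' ! q0) = keyw B' (fst (B ! p))" using keyw_at[OF B' q0(1)] q0 by simp
    thus "\<exists>q0<length B'. fst (B' ! q0) = fst (B ! p) \<and> snd (B' ! q0) = keyw B' (fst (B ! p))
      \<and> snd (B ! p) > 0 \<and> snd (B ! p) \<le> keyw B' (fst (B ! p))" using q0 w le by blast
  qed
  have qsum1: "\<And>p (g :: nat \<Rightarrow> real) z. p < length B \<Longrightarrow> (\<forall>q<length B'. fst (B' ! q) = fst (B ! p) \<longrightarrow> g q = z)
       \<Longrightarrow> (\<Sum>q<length B'. if fst (B ! p) = fst (B' ! q) then g q else 0) = z"
  proof -
    fix p and g :: "nat \<Rightarrow> real" and z :: real assume p: "p < length B" and h: "\<forall>q<length B'. fst (B' ! q) = fst (B ! p) \<longrightarrow> g q = z"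
    obtain q0 where q0: "q0 < length B'" "fst (B' ! q0) = fst (B ! p)" using match[OF p] by blast
    have "(\<Sum>q<length B'. if fst (B ! p) = fst (B' ! q) then g q else 0)
        = (\<Sum>q<length B'. if fst (B' ! q) = fst (B' ! q0) then g q else 0)"
      using q0 by (intro sum.cong) auto
    also have "\<dots> = g q0" by (rule sum_key[OF B' q0(1)])
    finally show "(\<Sum>q<length B'. if fst (B ! p) = fst (B' ! q) then g q else 0) = z" using h q0 by simp
  qed
  have prodeq: "X' * jsm n B' = X * jsm n B"
  proof (rule eq_matI)
    fix a c assume "a < dim_row (X * jsm n B)" "c < dim_col (X * jsm n B)"
    hence a: "a < k" and c: "c < n" using X J by auto
    have "(X' * jsm n B') $$ (a, c) = (\<Sum>q<length B'. X' $$ (a, q) * (snd (B' ! q) * fst (B' ! q) $ c))"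
      using a c X'c J' jsm_index[OF B' _ c] by (auto simp: scalar_prod_def lessThan_atLeast0 intro!: sum.cong)
    also have "\<dots> = (\<Sum>q<length B'. \<Sum>p<length B. if fst (B ! p) = fst (B' ! q)
          then t a p * (snd (B' ! q) * fst (B' ! q) $ c) else 0)"
      using a by (intro sum.cong refl) (auto simp: X'_def sum_distrib_right intro!: sum.cong)
    also have "\<dots> = (\<Sum>p<length B. \<Sum>q<length B'. if fst (B ! p) = fst (B' ! q)
          then t a p * (snd (B' ! q) * fst (B' ! q) $ c) else 0)"
      by (rule sum.swap)
    also have "\<dots> = (\<Sum>p<length B. X $$ (a, p) * (snd (B ! p) * fst (B ! p) $ c))"
    proof (intro sum.cong refl)
      fix p assume "p \<in> {..<length B}"
      hence p: "p < length B" by simp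
      obtain q0 where q0: "q0 < length B'" "fst (B' ! q0) = fst (B ! p)" "snd (B' ! q0) = keyw B' (fst (B ! p))"
        "snd (B ! p) > 0" "snd (B ! p) \<le> keyw B' (fst (B ! p))" using match[OF p] by blast
      show "(\<Sum>q<length B'. if fst (B ! p) = fst (B' ! q) then t a p * (snd (B' ! q) * fst (B' ! q) $ c) else 0)
          = X $$ (a, p) * (snd (B ! p) * fst (B ! p) $ c)"
      proof (rule qsum1[OF p], intro allI impI)
        fix q assume q: "q < length B'" "fst (B' ! q) = fst (B ! p)"
        have "q = q0" using key_unique[OF B' q0(1) q(1)] q q0 by simp
        hence "snd (B' ! q) = keyw B' (fst (B ! p))" using q0 by simp
        moreover have "keyw B' (fst (B ! p)) > 0" using q0 by linarith
        ultimately show "t a p * (snd (B' ! q) * fst (B' ! q) $ c) = X $$ (a, p) * (snd (B ! p) * fst (B ! p) $ c)"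
          unfolding t_def using q by (simp add: field_simps)
      qed
    qed
    also have "\<dots> = (X * jsm n B) $$ (a, c)"
      using a c X J jsm_index[OF B _ c] by (auto simp: scalar_prod_def lessThan_atLeast0 intro!: sum.cong)
    finally show "(X' * jsm n B') $$ (a, c) = (X * jsm n B) $$ (a, c)" .
  qed (use X'c X J J' in auto)
  have fsle: "fs X' \<le> fs X"
  proof -
    have row_eq: "\<And>a. a < k \<Longrightarrow> (\<Sum>q<length B'. (X' $$ (a, q))\<^sup>2) = (\<Sum>p<length B. (t a p)\<^sup>2)"
    proof -
      fix a assume a: "a < k"
      have "(\<Sum>q<length B'. (X' $$ (a, q))\<^sup>2)
          = (\<Sum>q<length B'. \<Sum>p<length B. if fst (B ! p) = fst (B' ! q) then (t a p)\<^sup>2 else 0)"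
      proof (intro sum.cong refl)
        fix q assume "q \<in> {..<length B'}"
        hence q: "q < length B'" by simp
        have "X' $$ (a, q) = (\<Sum>p<length B. if fst (B ! p) = fst (B' ! q) then t a p else 0)"
          unfolding X'_def using a q by simp
        also have "(\<dots>)\<^sup>2 = (\<Sum>p<length B. if fst (B ! p) = fst (B' ! q) then (t a p)\<^sup>2 else 0)"
        proof (rule sq_single)
          show "\<forall>p1\<in>{..<length B}. \<forall>p2\<in>{..<length B}. fst (B ! p1) = fst (B' ! q) \<longrightarrow> fst (B ! p2) = fst (B' ! q) \<longrightarrow> p1 = p2"
          proof (intro ballI impI)
            fix p1 p2 assume "p1 \<in> {..<length B}" "p2 \<in> {..<length B}" "fst (B ! p1) = fst (B' ! q)" "fst (B ! p2) = fst (B' ! q)"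
            thus "p1 = p2" using key_unique[OF B, of p2 p1] by simp
          qed
        qed simp
        finally show "(X' $$ (a, q))\<^sup>2 = (\<Sum>p<length B. if fst (B ! p) = fst (B' ! q) then (t a p)\<^sup>2 else 0)" .
      qed
      also have "\<dots> = (\<Sum>p<length B. \<Sum>q<length B'. if fst (B ! p) = fst (B' ! q) then (t a p)\<^sup>2 else 0)"
        by (rule sum.swap)
      also have "\<dots> = (\<Sum>p<length B. (t a p)\<^sup>2)"
        by (intro sum.cong refl qsum1) auto
      finally show "(\<Sum>q<length B'. (X' $$ (a, q))\<^sup>2) = (\<Sum>p<length B. (t a p)\<^sup>2)" .
    qed
    have tle: "\<And>a p. p < length B \<Longrightarrow> (t a p)\<^sup>2 \<le> (X $$ (a, p))\<^sup>2"
    proof -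
      fix a p assume p: "p < length B"
      obtain q0 where q0: "snd (B ! p) > 0" "snd (B ! p) \<le> keyw B' (fst (B ! p))" using match[OF p] by blast
      define w where "w = snd (B ! p)"
      define w' where "w' = keyw B' (fst (B ! p))"
      have ww: "0 < w" "w \<le> w'" using q0 unfolding w_def w'_def by auto
      have r: "0 \<le> w / w'" "w / w' \<le> 1" using ww by auto
      have "(w / w')\<^sup>2 \<le> 1" using r by (simp add: power_le_one)
      hence "(X $$ (a, p))\<^sup>2 * (w / w')\<^sup>2 \<le> (X $$ (a, p))\<^sup>2 * 1"
        by (intro mult_left_mono) auto
      moreover have "(t a p)\<^sup>2 = (X $$ (a, p))\<^sup>2 * (w / w')\<^sup>2"
        unfolding t_def w_def w'_def by (simp add: power_mult_distrib power_divide)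
      ultimately show "(t a p)\<^sup>2 \<le> (X $$ (a, p))\<^sup>2" by simp
    qed
    have "fs X' = (\<Sum>a<k. \<Sum>p<length B. (t a p)\<^sup>2)" unfolding fs_def using X'c row_eq by simp
    also have "\<dots> \<le> (\<Sum>a<k. \<Sum>p<length B. (X $$ (a, p))\<^sup>2)"
      by (intro sum_mono) (use tle in auto)
    also have "\<dots> = fs X" unfolding fs_def using X by simp
    finally show ?thesis .
  qed
  show ?thesis using X'c prodeq fsle by blast
qed



lemma colsum_total:
  fixes A :: "nat \<Rightarrow> real mat" and s :: "nat \<Rightarrow> real"
  assumes Adim: "\<And>l. A l \<in> carrier_mat (m l) n" and cols: "\<And>l c. c < n \<Longrightarrow> (\<Sum>r<m l. \<bar>A l $$ (r, c)\<bar>) = 1"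
    and s_pos: "\<And>l. s l > 0" and c: "c < n"
  shows "(\<Sum>l\<in>S. \<Sum>r<dim_row (A l). \<bar>row (s l \<cdot>\<^sub>m A l) r $ c\<bar>) = (\<Sum>l\<in>S. s l)"
proof (intro sum.cong refl)
  fix l
  have "(\<Sum>r<dim_row (A l). \<bar>row (s l \<cdot>\<^sub>m A l) r $ c\<bar>) = (\<Sum>r<m l. s l * \<bar>A l $$ (r, c)\<bar>)"
  proof (intro sum.cong)
    fix r assume "r \<in> {..<m l}"
    hence r: "r < m l" by simp
    have "\<bar>s l * A l $$ (r, c)\<bar> = s l * \<bar>A l $$ (r, c)\<bar>" using s_pos[of l] by (simp add: abs_mult)
    thus "\<bar>row (s l \<cdot>\<^sub>m A l) r $ c\<bar> = s l * \<bar>A l $$ (r, c)\<bar>" using Adim[of l] c r by simp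
  qed (use Adim[of l] in simp)
  also have "\<dots> = s l" using cols[OF c, of l] by (simp add: sum_distrib_left[symmetric])
  finally show "(\<Sum>r<dim_row (A l). \<bar>row (s l \<cdot>\<^sub>m A l) r $ c\<bar>) = s l" .
qed

lemma err_simp:
  assumes "T > 0" "\<epsilon> > 0"
  shows "2 * T\<^sup>2 / (T * \<epsilon>)\<^sup>2 * F = 2 / \<epsilon>\<^sup>2 * (F::real)"
  using assms by (simp add: power_mult_distrib)

theorem mainTheorem3:
  fixes n :: nat and N :: "real vec \<Rightarrow> real" and \<epsilon> :: real
    and W A :: "nat \<Rightarrow> real mat" and s :: "nat \<Rightarrow> real"
    and k m :: "nat \<Rightarrow> nat" and S :: "nat set" and i j :: nat
  assumes eps: "\<epsilon> > 0"
    and norm: "is_row_norm n N"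
    and W_dim: "\<And>l. W l \<in> carrier_mat (k l) n"
    and A_dim: "\<And>l. A l \<in> carrier_mat (m l) n"
    and s_pos: "\<And>l. s l > 0"
    and recon: "\<And>l. W l = W l * mp_pinv (A l) * A l"
    and cols: "\<And>l c. c < n \<Longrightarrow> (\<Sum>r<m l. \<bar>A l $$ (r, c)\<bar>) = 1"
    and S_fin: "finite S" and S_ne: "S \<noteq> {}"
    and j_notin: "j \<notin> S" and i_in: "i \<in> S"
  shows "wf_err n N \<epsilon> W s A i (insert j S) \<le> wf_err n N \<epsilon> W s A i S"
proof -
  have Adim: "\<And>l. dim_col (A l) = n" using A_dim by auto
  define BS where "BS = wf_buckets n N s A S"
  define BS' where "BS' = wf_buckets n N s A (insert j S)"
  define F where "F l e = (\<Sum>r<dim_row (A l). contrib n N (row (s l \<cdot>\<^sub>m A l) r) e)" for l e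
  have JS: "joint_strategy n N s A S = jsm n BS" unfolding joint_strategy_def jsm_def BS_def by simp
  have JS': "joint_strategy n N s A (insert j S) = jsm n BS'" unfolding joint_strategy_def jsm_def BS'_def by simp
  note bp = buckets_props[where A=A and s=s and S=S, OF norm Adim S_fin, folded BS_def]
  note bp' = buckets_props[where A=A and s=s and S="insert j S", OF norm Adim finite.insertI[OF S_fin], folded BS'_def]
  have B: "binv n BS" and B': "binv n BS'" using bp bp' by auto
  have kw: "\<And>e. keyw BS e = (\<Sum>l\<in>S. F l e)" using bp unfolding F_def by simp
  have kw': "\<And>e. keyw BS' e = F j e + (\<Sum>l\<in>S. F l e)" using bp' S_fin j_notin unfolding F_def by simp
  have Fnn: "\<And>l e. F l e \<ge> 0" unfolding F_def
  proof (intro sum_nonneg contrib_nonneg[OF norm])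
    fix l e r show "row (s l \<cdot>\<^sub>m A l) r \<in> carrier_vec n" using Adim[of l] unfolding carrier_vec_def by simp
  qed
  have mono: "\<forall>e. keyw BS e \<le> keyw BS' e" using kw kw' Fnn by (simp add: add_increasing)
  show ?thesis
  proof (cases "n = 0")
    case True
    have "\<And>M. dim_col M = 0 \<Longrightarrow> col_L1_norm M = 0" unfolding col_L1_norm_def by simp
    hence "col_L1_norm (jsm n BS) = 0" "col_L1_norm (jsm n BS') = 0"
      using True jsm_carrier[of n BS] jsm_carrier[of n BS'] by auto
    thus ?thesis unfolding wf_err_def JS JS' Let_def by simp
  next
    case False
    hence n: "n > 0" by simp
    define T where "T = (\<Sum>l\<in>S. s l)"
    have T: "T > 0" unfolding T_def using S_fin S_ne s_pos by (simp add: sum_pos)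
    have T': "(\<Sum>l\<in>insert j S. s l) = s j + T" unfolding T_def using S_fin j_notin by simp
    have T'pos: "s j + T > 0" using T s_pos[of j] by simp
    have cn: "col_L1_norm (jsm n BS) = T"
      by (rule jsm_col_norm[OF B n]) (use bp colsum_total[where A=A and m=m and s=s and S=S, OF A_dim cols s_pos] T in \<open>auto simp: T_def\<close>)
    have cn': "col_L1_norm (jsm n BS') = s j + T"
      by (rule jsm_col_norm[OF B' n]) (use bp' colsum_total[where A=A and m=m and s=s and S="insert j S", OF A_dim cols s_pos] T'pos T' in auto)
    define AS where "AS = jsm n BS"
    define AS' where "AS' = jsm n BS'"
    have ASc: "AS \<in> carrier_mat (length BS) n" and ASc': "AS' \<in> carrier_mat (length BS') n"
      unfolding AS_def AS'_def by (rule jsm_carrier)+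
    define P where "P = mp_pinv AS"
    define P' where "P' = mp_pinv AS'"
    have pP: "penrose AS P" unfolding P_def by (rule mp_pinv_penrose[OF ASc])
    have pP': "penrose AS' P'" unfolding P'_def by (rule mp_pinv_penrose[OF ASc'])
    have Pc: "P \<in> carrier_mat n (length BS)" using pP ASc unfolding penrose_def by auto
    have Pc': "P' \<in> carrier_mat n (length BS')" using pP' ASc' unfolding penrose_def by auto
    have pPi: "penrose (A i) (mp_pinv (A i))" by (rule mp_pinv_penrose[OF A_dim])
    have Pic: "mp_pinv (A i) \<in> carrier_mat n (m i)" using pPi A_dim[of i] unfolding penrose_def by auto
    have cov: "\<forall>r<m i. row (s i \<cdot>\<^sub>m A i) r \<noteq> 0\<^sub>v n \<longrightarrow>
        keyw BS ((1 / N (row (s i \<cdot>\<^sub>m A i) r)) \<cdot>\<^sub>v row (s i \<cdot>\<^sub>m A i) r) > 0"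
    proof (intro allI impI)
      fix r assume r: "r < m i" and nz: "row (s i \<cdot>\<^sub>m A i) r \<noteq> 0\<^sub>v n"
      define v where "v = row (s i \<cdot>\<^sub>m A i) r"
      define e where "e = (1 / N v) \<cdot>\<^sub>v v"
      have vc: "v \<in> carrier_vec n" unfolding v_def using A_dim[of i] r by simp
      have Nv: "N v > 0" using norm_props[OF norm vc] nz unfolding v_def by simp
      have ceq: "contrib n N v e = N v" unfolding contrib_def e_def using nz unfolding v_def by simp
      have c1: "contrib n N v e \<le> F i e" unfolding F_def v_def
      proof (rule member_le_sum)
        show "r \<in> {..<dim_row (A i)}" using r A_dim[of i] by simp
        fix x show "0 \<le> contrib n N (row (s i \<cdot>\<^sub>m A i) x) e"
          by (rule contrib_nonneg[OF norm]) (use Adim[of i] in \<open>unfold carrier_vec_def, simp\<close>)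
      qed simp
      have c2: "F i e \<le> (\<Sum>l\<in>S. F l e)" using i_in S_fin Fnn by (intro member_le_sum) auto
      have "keyw BS e > 0" using ceq c1 c2 Nv kw[of e] by linarith
      thus "keyw BS ((1 / N (row (s i \<cdot>\<^sub>m A i) r)) \<cdot>\<^sub>v row (s i \<cdot>\<^sub>m A i) r) > 0"
        unfolding e_def v_def by simp
    qed
    obtain R where Rc: "R \<in> carrier_mat (m i) (length BS)" and AiR: "A i = R * AS"
      using rowspace[OF B norm A_dim s_pos cov] unfolding AS_def by blast
    define C where "C = W i * mp_pinv (A i) * R"
    have Cc: "C \<in> carrier_mat (k i) (length BS)" unfolding C_def using W_dim[of i] Pic Rc by auto
    have WC: "W i = C * AS"
    proof -
      have "W i = W i * mp_pinv (A i) * (R * AS)" using recon[of i] AiR by simp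
      also have "\<dots> = C * AS" unfolding C_def using W_dim[of i] Pic Rc ASc by (simp add: assoc_dim)
      finally show ?thesis .
    qed
    define X where "X = W i * P"
    have Xc: "X \<in> carrier_mat (k i) (length BS)" unfolding X_def using W_dim[of i] Pc by auto
    have XAS: "X * AS = W i"
    proof -
      have "X * AS = C * (AS * P * AS)" unfolding X_def WC using Cc ASc Pc by (simp add: assoc_dim)
      also have "AS * P * AS = AS" using pP unfolding penrose_def by simp
      finally show ?thesis using WC by simp
    qed
    obtain X' where X'c: "X' \<in> carrier_mat (k i) (length BS')" and X'eq: "X' * AS' = X * AS" and fsX: "fs X' \<le> fs X"
      using transfer[OF B B' mono Xc] unfolding AS_def AS'_def by blast
    define Q where "Q = AS' * P'"
    have Qc: "Q \<in> carrier_mat (length BS') (length BS')" unfolding Q_def using ASc' Pc' by auto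
    have Qt: "transpose_mat Q = Q" unfolding Q_def using pP' unfolding penrose_def by simp
    have QQ: "Q * Q = Q"
    proof -
      have "Q * Q = (AS' * P' * AS') * P'" unfolding Q_def using ASc' Pc' by (simp add: assoc_dim)
      also have "AS' * P' * AS' = AS'" using pP' unfolding penrose_def by simp
      finally show ?thesis unfolding Q_def .
    qed
    have WP': "W i * P' = X' * Q"
    proof -
      have "W i * P' = (X' * AS') * P'" using X'eq XAS by simp
      also have "\<dots> = X' * Q" unfolding Q_def using X'c ASc' Pc' by (simp add: assoc_dim)
      finally show ?thesis .
    qed
    have fin: "fs (W i * P') \<le> fs (W i * P)"
      using proj_le[OF X'c Qc Qt QQ] fsX unfolding WP' X_def by simp
    have e1: "wf_err n N \<epsilon> W s A i S = 2 / \<epsilon>\<^sup>2 * fs (W i * mp_pinv (jsm n BS))"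
      unfolding wf_err_def JS Let_def cn frob_sq T_def[symmetric]
      using err_simp[OF T eps] by simp
    have e2: "wf_err n N \<epsilon> W s A i (insert j S) = 2 / \<epsilon>\<^sup>2 * fs (W i * mp_pinv (jsm n BS'))"
      unfolding wf_err_def JS' Let_def cn' frob_sq T'
      using err_simp[OF T'pos eps] by simp
    show ?thesis unfolding e1 e2 using fin eps unfolding P_def P'_def AS_def AS'_def by (intro mult_left_mono) auto
  qed
qed


end
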